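(* Let $f:\mathcal D\subset\Omega\times(0,\infty)\to\Omega\times(0,\infty)$ be a measure-preserving embedding and suppose there exist $W\in\mathcal C^1_\psi(\Omega\times(0,\infty))$, constants $\beta,\delta>0$ and a decreasing bounded function $k:(0,\infty)\to\mathbb R$ with $\lim_{r\to\infty}k(r)=0$ such that $\beta\le\partial_rW\le\delta$ on $\Omega\times(0,\infty)$ and $W(f(\omega,r))\le W(\omega,r)+k(r)$ on $\mathcal D$. Then there is a measurable set $\mathcal Z\subset\mathcal U$ with $(\mu_\Omega\otimes\lambda)(\mathcal Z)=0$ such that $\liminf_{n\to\infty}r_n<\infty$ for every $(\omega_0,r_0)\in\mathcal U\setminus\mathcal Z$. In particular the set $\mathcal E=\{(\omega_0,r_0)\in\mathcal D_\infty:\lim_{n\to\infty}r_n=\infty\}$ satisfies $\mathcal E\subset\mathcal Z$ and has $\mu_\Omega\otimes\lambda$-measure zero.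
   Context: $\Omega$ is a commutative (written additively), compact, metrizable topological group, and $\psi:\mathbb R\to\Omega$ is a continuous group homomorphism with $\psi(\mathbb R)$ dense. $\mu_\Omega$ is the Haar probability measure of $\Omega$ and $\lambda$ Lebesgue measure on $\mathbb R$. For $U:\Omega\to\mathbb R$, $\partial_\psi U(\omega)=\lim_{t\to0}\frac{U(\omega+\psi(t))-U(\omega)}{t}$; $\mathcal C^1_\psi(\Omega)$ is the space of continuous $U$ with $\partial_\psi U$ existing everywhere and continuous; $\mathcal C^1_\psi(\Omega\times(0,\infty))$ is the set of $W(\omega,r)$ with $W(\cdot,r)\in\mathcal C^1_\psi(\Omega)$ for all $r$ and $W(\omega,\cdot)\in\mathcal C^1(0,\infty)$ for all $\omega$. A measure-preserving embedding is a continuous injective map $f:\mathcal D\to\Omega\times(0,\infty)$, $\mathcal D\subset\Omega\times(0,\infty)$ open, with $(\mu_\Omega\otimes\lambda)(f(\mathcal B))=(\mu_\Omega\otimes\lambda)(\mathcal B)$ for Borel $\mathcal B\subset\mathcal D$. Set $\mathcal D_1=\mathcal D$, $\mathcal D_{n+1}=f^{-1}(\mathcal D_n)$, $\mathcal D_\infty=\bigcap_n\mathcal D_n$; for $(\omega_0,r_0)\in\mathcal D_\infty$ write $(\omega_n,r_n)=f^n(\omega_0,r_0)$, and $\mathcal U=\{(\omega_0,r_0)\in\mathcal D_\infty:\limsup_{n\to\infty}r_n=\infty\}$. *)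

theory Defs
  imports "HOL-Analysis.Analysis" "HOL-Probability.Probability"
begin

definition haar_prob :: "'a::{topological_space, ab_group_add} measure \<Rightarrow> bool" where
  "haar_prob M \<longleftrightarrow> prob_space M \<and> sets M = sets borel \<and>
     (\<forall>x. \<forall>A\<in>sets borel. emeasure M ((\<lambda>y. x + y) ` A) = emeasure M A)"

definition psi_deriv :: "(real \<Rightarrow> 'a::ab_group_add) \<Rightarrow> ('a \<Rightarrow> real) \<Rightarrow> 'a \<Rightarrow> real \<Rightarrow> bool" where
  "psi_deriv psi U w D \<longleftrightarrow> ((\<lambda>t. U (w + psi t)) has_real_derivative D) (at 0)"

definition C1_psi :: "(real \<Rightarrow> 'a::{topological_space, ab_group_add}) \<Rightarrow> ('a \<Rightarrow> real) \<Rightarrow> bool" where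
  "C1_psi psi U \<longleftrightarrow> continuous_on UNIV U \<and>
     (\<exists>dU. continuous_on UNIV dU \<and> (\<forall>w. psi_deriv psi U w (dU w)))"

definition C1_psi_r :: "(real \<Rightarrow> 'a::{topological_space, ab_group_add}) \<Rightarrow> ('a \<Rightarrow> real \<Rightarrow> real) \<Rightarrow> bool" where
  "C1_psi_r psi W \<longleftrightarrow> (\<forall>r>0. C1_psi psi (\<lambda>w. W w r)) \<and>
     (\<forall>w. \<exists>W'. (\<forall>r>0. (W w has_real_derivative W' r) (at r)) \<and> continuous_on {0<..} W')"

definition mp_embedding :: "('a::topological_space \<times> real) measure \<Rightarrow> ('a \<times> real) set \<Rightarrow> ('a \<times> real \<Rightarrow> 'a \<times> real) \<Rightarrow> bool"
  where "mp_embedding M D f \<longleftrightarrow>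
     open D \<and> D \<subseteq> UNIV \<times> {0<..} \<and> continuous_on D f \<and> inj_on f D \<and> f ` D \<subseteq> UNIV \<times> {0<..} \<and>
     (\<forall>B\<in>sets borel. B \<subseteq> D \<longrightarrow> emeasure M (f ` B) = emeasure M B)"

text \<open>Dom f D n is D_{n+1}: Dom 0 = D, Dom (n+1) = f^{-1}(Dom n) (preimage inside D).\<close>
fun Dom :: "('b \<Rightarrow> 'b) \<Rightarrow> 'b set \<Rightarrow> nat \<Rightarrow> 'b set" where
  "Dom f D 0 = D"
| "Dom f D (Suc n) = {x\<in>D. f x \<in> Dom f D n}"

definition Dinf :: "('b \<Rightarrow> 'b) \<Rightarrow> 'b set \<Rightarrow> 'b set" where
  "Dinf f D = (\<Inter>n. Dom f D n)"

definition rseq :: "('a \<times> real \<Rightarrow> 'a \<times> real) \<Rightarrow> 'a \<times> real \<Rightarrow> nat \<Rightarrow> real" where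
  "rseq f x n = snd ((f ^^ n) x)"

definition Uset :: "('a \<times> real \<Rightarrow> 'a \<times> real) \<Rightarrow> ('a \<times> real) set \<Rightarrow> ('a \<times> real) set" where
  "Uset f D = {x\<in>Dinf f D. limsup (\<lambda>n. ereal (rseq f x n)) = \<infinity>}"

definition Eset :: "('a \<times> real \<Rightarrow> 'a \<times> real) \<Rightarrow> ('a \<times> real) set \<Rightarrow> ('a \<times> real) set" where
  "Eset f D = {x\<in>Dinf f D. filterlim (rseq f x) at_top sequentially}"

end

theory Submission
  imports Defs
begin


lemma sets_pair_borel_eq:
  fixes mu :: "'a::metric_space measure"
  assumes cpt: "compact (UNIV :: 'a set)" and smu: "sets mu = sets borel"
  shows "sets (mu \<Otimes>\<^sub>M lborel) = sets (borel :: ('a \<times> real) measure)"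
proof
  have rect: "a \<times> b \<in> sets (borel :: ('a \<times> real) measure)"
    if "a \<in> sets mu" "b \<in> sets (lborel::real measure)" for a b
  proof -
    have ab: "a \<in> sets borel" "b \<in> sets borel" using that smu by auto
    have m1: "fst \<in> borel_measurable (borel :: ('a \<times> real) measure)"
      by (intro borel_measurable_continuous_onI continuous_intros)
    have m2: "snd \<in> borel_measurable (borel :: ('a \<times> real) measure)"
      by (intro borel_measurable_continuous_onI continuous_intros)
    have "a \<times> b = (fst -` a \<inter> space borel) \<inter> (snd -` b \<inter> space borel)" by auto
    also have "\<dots> \<in> sets borel"
      using measurable_sets[OF m1 ab(1)] measurable_sets[OF m2 ab(2)] by auto
    finally show ?thesis .
  qed
  show "sets (mu \<Otimes>\<^sub>M (lborel::real measure)) \<subseteq> sets (borel :: ('a \<times> real) measure)"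
    by (rule sets_pair_in_sets) (rule rect)

next
  let ?M = "mu \<Otimes>\<^sub>M (lborel::real measure)"
  have sp: "space ?M = UNIV" using smu by (simp add: space_pair_measure sets_eq_imp_space_eq)
  have tb: "\<forall>e>0. \<exists>k. finite k \<and> k \<subseteq> (UNIV::'a set) \<and> UNIV \<subseteq> (\<Union>x\<in>k. ball x e)"
    by (rule seq_compact_imp_totally_bounded[OF compact_imp_seq_compact[OF cpt]])
  obtain K :: "nat \<Rightarrow> 'a set" where K: "\<And>n. finite (K n)" "\<And>n. UNIV \<subseteq> (\<Union>x\<in>K n. ball x (1 / Suc n))"
  proof -
    have "\<forall>n::nat. \<exists>k::'a set. finite k \<and> UNIV \<subseteq> (\<Union>x\<in>k. ball x (1 / Suc n))"
    proof
      fix n :: nat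
      have "(1::real) / Suc n > 0" by simp
      from tb[rule_format, OF this] obtain k :: "'a set" where
        kk: "finite k \<and> k \<subseteq> UNIV \<and> UNIV \<subseteq> (\<Union>x\<in>k. ball x (1 / Suc n))"
        by (rule exE)
      show "\<exists>k::'a set. finite k \<and> UNIV \<subseteq> (\<Union>x\<in>k. ball x (1 / Suc n))"
      proof (intro exI conjI)
        show "finite k" using kk by (rule conjunct1)
        show "UNIV \<subseteq> (\<Union>x\<in>k. ball x (1 / Suc n))" using kk by (elim conjE)
      qed
    qed
    from choice[OF this] obtain K :: "nat \<Rightarrow> 'a set" where KK: "\<forall>n. finite (K n) \<and> UNIV \<subseteq> (\<Union>x\<in>K n. ball x (1 / Suc n))"
      by (rule exE)
    show ?thesis
    proof (rule that)
      fix n show "finite (K n)" using KK by simp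
      show "UNIV \<subseteq> (\<Union>x\<in>K n. ball x (1 / Suc n))" using KK by simp
    qed
  qed
  define Bs where "Bs = (\<Union>n. (\<lambda>x. ball x (1 / Suc n)) ` K n)"
  define Is where "Is = (\<lambda>(s,t). {s<..<t::real}) ` (\<rat> \<times> \<rat>)"
  have cn: "countable ((\<lambda>x. ball x (1 / Suc n)) ` K n)" for n
    by (rule countable_image[OF countable_finite[OF K(1)]])
  have cBs: "countable Bs" unfolding Bs_def by (rule countable_UN[OF _ cn]) simp
  have cIs: "countable Is" unfolding Is_def by (auto intro!: countable_image countable_SIGMA countable_rat)
  have Bs_open: "open b" if "b \<in> Bs" for b using that unfolding Bs_def by auto
  have Is_open: "open i" if "i \<in> Is" for i using that unfolding Is_def by auto
  have opn: "U \<in> sets ?M" if "open U" for U :: "('a \<times> real) set"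
  proof -
    define S where "S = {p \<in> Bs \<times> Is. fst p \<times> snd p \<subseteq> U}"
    define R where "R = (\<lambda>p. fst p \<times> snd p) ` S"
    have "countable (Bs \<times> Is)" by (intro countable_SIGMA cBs cIs)
    hence "countable S" unfolding S_def by (rule countable_subset[rotated]) blast
    hence cR: "countable R" unfolding R_def by (rule countable_image)
    have RM: "R \<subseteq> sets ?M"
    proof
      fix r assume "r \<in> R"
      then obtain p where p: "p \<in> S" "r = fst p \<times> snd p" unfolding R_def by (rule imageE)
      have "fst p \<in> Bs" "snd p \<in> Is" using p(1) unfolding S_def by auto
      hence "fst p \<in> sets mu" "snd p \<in> sets lborel" using Bs_open Is_open smu by auto
      thus "r \<in> sets ?M" using p(2) by (simp add: pair_measureI)
    qed
    have "U = \<Union>R"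
    proof
      show "\<Union>R \<subseteq> U"
      proof
        fix z assume "z \<in> \<Union>R"
        then obtain r where "r \<in> R" "z \<in> r" by (rule UnionE)
        then obtain p where "p \<in> S" "z \<in> fst p \<times> snd p" unfolding R_def by (auto elim!: imageE)
        thus "z \<in> U" unfolding S_def by auto
      qed
      show "U \<subseteq> \<Union>R"
      proof
        fix z assume "z \<in> U"
        obtain p q where z: "z = (p,q)" by fastforce
        obtain A B where AB: "open A" "open B" "(p,q) \<in> A \<times> B" "A \<times> B \<subseteq> U"
          using open_prod_elim[OF \<open>open U\<close> \<open>z \<in> U\<close>] z by metis
        have pA: "p \<in> A" and qB: "q \<in> B" using AB(3) by auto
        obtain e where e: "e > 0" "ball p e \<subseteq> A" using open_contains_ball_eq[OF AB(1)] pA by blast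
        obtain e' where e': "e' > 0" "ball q e' \<subseteq> B" using open_contains_ball_eq[OF AB(2)] qB by blast
        obtain n :: nat where n: "1 / Suc n < e / 2"
          using e(1) by (metis half_gt_zero nat_approx_posE)
        have "p \<in> (\<Union>x\<in>K n. ball x (1 / Suc n))" using K(2)[of n] by (rule subsetD) simp
        then obtain x where x: "x \<in> K n" "p \<in> ball x (1 / Suc n)" by (rule UN_E)
        have bx: "ball x (1 / Suc n) \<subseteq> A"
        proof
          fix y assume y: "y \<in> ball x (1 / Suc n)"
          have "dist p y \<le> dist p x + dist x y" by (rule dist_triangle)
          moreover have "dist p x < 1 / Suc n" using x(2) by (simp add: dist_commute)
          moreover have "dist x y < 1 / Suc n" using y by simp
          ultimately have "dist p y < e" using n by linarith
          thus "y \<in> A" using e(2) by auto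
        qed
        obtain s where s: "s \<in> \<rat>" "q - e' < s" "s < q" using Rats_dense_in_real[of "q - e'" q] e' by auto
        obtain t where t: "t \<in> \<rat>" "q < t" "t < q + e'" using Rats_dense_in_real[of q "q + e'"] e' by auto
        have it: "{s<..<t} \<subseteq> B"
        proof
          fix y assume "y \<in> {s<..<t}"
          hence "dist q y < e'" using s t by (auto simp: dist_real_def)
          thus "y \<in> B" using e'(2) by auto
        qed
        have bB: "ball x (1 / Suc n) \<in> Bs" unfolding Bs_def using x(1) by blast
        have iI: "{s<..<t} \<in> Is" unfolding Is_def using s(1) t(1) by force
        have sub: "ball x (1 / Suc n) \<times> {s<..<t} \<subseteq> U" using bx it AB(4) by blast
        have "(ball x (1 / Suc n), {s<..<t}) \<in> S" unfolding S_def using bB iI sub by simp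
        hence "ball x (1 / Suc n) \<times> {s<..<t} \<in> R" unfolding R_def by force
        moreover have "z \<in> ball x (1 / Suc n) \<times> {s<..<t}" using z x s t by auto
        ultimately show "z \<in> \<Union>R" by (rule UnionI)
      qed
    qed
    thus ?thesis using sets.countable_Union[OF cR RM] by simp
  qed
  have "{S. open S} \<subseteq> sets ?M"
  proof
    fix S :: "('a \<times> real) set" assume "S \<in> {S. open S}"
    hence "open S" by simp
    thus "S \<in> sets ?M" by (rule opn)
  qed
  hence "sigma_sets (space ?M) {S. open S} \<subseteq> sets ?M" by (rule sets.sigma_sets_subset)
  hence "sigma_sets UNIV {S. open S} \<subseteq> sets ?M" by (simp only: sp)
  thus "sets borel \<subseteq> sets ?M" by (simp only: sets_borel)
qed




lemma fs: "(f ^^ Suc j) x = (f ^^ j) (f x)" by (simp add: funpow_Suc_right del: funpow.simps)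

lemma dom_iff: "x \<in> Dom f D n \<longleftrightarrow> (\<forall>j\<le>n. (f ^^ j) x \<in> D)"
proof (induction n arbitrary: x)
  case 0 then show ?case by simp
next
  case (Suc n)
  have "x \<in> Dom f D (Suc n) \<longleftrightarrow> x \<in> D \<and> (\<forall>j\<le>n. (f ^^ j) (f x) \<in> D)" using Suc.IH[of "f x"] by simp
  also have "\<dots> \<longleftrightarrow> (\<forall>j\<le>Suc n. (f ^^ j) x \<in> D)"
  proof
    assume a: "x \<in> D \<and> (\<forall>j\<le>n. (f ^^ j) (f x) \<in> D)"
    show "\<forall>j\<le>Suc n. (f ^^ j) x \<in> D"
    proof (intro allI impI)
      fix j assume j: "j \<le> Suc n"
      show "(f ^^ j) x \<in> D"
      proof (cases j)
        case 0 thus ?thesis using a by simp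
      next
        case (Suc i) thus ?thesis using a j by (simp add: fs del: funpow.simps)
      qed
    qed
  next
    assume a: "\<forall>j\<le>Suc n. (f ^^ j) x \<in> D"
    have "(f ^^ j) (f x) \<in> D" if "j \<le> n" for j
    proof -
      have "Suc j \<le> Suc n" using that by simp
      hence "(f ^^ Suc j) x \<in> D" using a by blast
      thus ?thesis by (simp only: fs)
    qed
    moreover have "x \<in> D" using a by force
    ultimately show "x \<in> D \<and> (\<forall>j\<le>n. (f ^^ j) (f x) \<in> D)" by blast
  qed
  finally show ?case .
qed

lemma Dinf_iff: "x \<in> Dinf f D \<longleftrightarrow> (\<forall>j. (f ^^ j) x \<in> D)"
proof
  assume "x \<in> Dinf f D"
  hence "x \<in> Dom f D j" for j unfolding Dinf_def by simp
  thus "\<forall>j. (f ^^ j) x \<in> D" using dom_iff by (metis order_refl)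
next
  assume a: "\<forall>j. (f ^^ j) x \<in> D"
  hence "x \<in> Dom f D n" for n using dom_iff by metis
  thus "x \<in> Dinf f D" unfolding Dinf_def by simp
qed

locale setting =
  fixes mu :: "'a::metric_space measure"
    and f :: "'a \<times> real \<Rightarrow> 'a \<times> real"
    and D :: "('a \<times> real) set"
    and W :: "'a \<Rightarrow> real \<Rightarrow> real"
    and k :: "real \<Rightarrow> real"
    and beta delta :: real
  assumes cpt: "compact (UNIV :: 'a set)"
    and prob: "prob_space mu"
    and smu: "sets mu = sets borel"
    and emb: "mp_embedding (mu \<Otimes>\<^sub>M lborel) D f"
    and Wc: "\<And>r. r > 0 \<Longrightarrow> continuous_on UNIV (\<lambda>w. W w r)"
    and beta_pos: "beta > 0" and delta_pos: "delta > 0"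
    and W_r_bounds: "\<And>w r. r > 0 \<Longrightarrow> \<exists>d. (W w has_real_derivative d) (at r) \<and> beta \<le> d \<and> d \<le> delta"
    and k_bdd: "bounded (k ` {0<..})"
    and k_lim: "(k \<longlongrightarrow> 0) at_top"
    and W_f: "\<And>w r. (w, r) \<in> D \<Longrightarrow> W (fst (f (w, r))) (snd (f (w, r))) \<le> W w r + k r"
begin

abbreviation "M \<equiv> mu \<Otimes>\<^sub>M (lborel :: real measure)"

lemma sM: "sets M = sets borel" using sets_pair_borel_eq[OF cpt smu] .
lemma spM: "space M = UNIV" using sets_eq_imp_space_eq[OF sM] by simp

lemma openD: "open D" and Dpos: "D \<subseteq> UNIV \<times> {0<..}" and fcont: "continuous_on D f"
  and finj: "inj_on f D" and fpos: "f ` D \<subseteq> UNIV \<times> {0<..}"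
  and fmeas: "\<And>B. B \<in> sets borel \<Longrightarrow> B \<subseteq> D \<Longrightarrow> emeasure M (f ` B) = emeasure M B"
  using emb unfolding mp_embedding_def by auto

lemma Wmono: assumes "0 < r" "r \<le> s"
  shows "beta * (s - r) \<le> W w s - W w r \<and> W w s - W w r \<le> delta * (s - r)"
proof (cases "r = s")
  case True then show ?thesis by simp
next
  case False
  hence rs: "r < s" using assms by simp
  define W' where "W' = (\<lambda>t. SOME d. (W w has_real_derivative d) (at t) \<and> beta \<le> d \<and> d \<le> delta)"
  have W': "(W w has_real_derivative W' t) (at t) \<and> beta \<le> W' t \<and> W' t \<le> delta" if "t > 0" for t
    unfolding W'_def using someI_ex[OF W_r_bounds[OF that, of w]] .
  obtain z where z: "r < z" "z < s" "W w s - W w r = (s - r) * W' z"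
    using MVT2[OF rs, of "W w" W'] W' assms by force
  have "beta \<le> W' z" "W' z \<le> delta" using W'[of z] z assms by auto
  thus ?thesis using z rs by (simp add: mult.commute mult_right_mono)
qed

lemma W1bound: obtains C where "C \<ge> 0" "\<And>w. \<bar>W w 1\<bar> \<le> C"
proof -
  have "compact ((\<lambda>w. W w 1) ` UNIV)" using compact_continuous_image[OF Wc cpt] by simp
  then obtain B where "B > 0" "\<And>w. norm (W w 1) \<le> B"
    by (meson compact_imp_bounded bounded_pos rangeI)
  thus ?thesis using that[of B] by auto
qed

definition "C0 = (SOME C. C \<ge> 0 \<and> (\<forall>w. \<bar>W w 1\<bar> \<le> C))"
lemma C0_props: "C0 \<ge> 0" "\<bar>W w 1\<bar> \<le> C0"
proof -
  have "\<exists>C. C \<ge> 0 \<and> (\<forall>w. \<bar>W w 1\<bar> \<le> C)" using W1bound by metis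
  from someI_ex[OF this] show "C0 \<ge> 0" "\<bar>W w 1\<bar> \<le> C0" unfolding C0_def by auto
qed

definition "C1 = beta + C0 + delta"

lemma Wlow: "r > 0 \<Longrightarrow> beta * r - C1 \<le> W w r"
proof -
  assume r: "r > 0"
  show ?thesis
  proof (cases "r \<le> 1")
    case True
    have "W w 1 - W w r \<le> delta * (1 - r)" using Wmono[OF r True] by simp
    moreover have "delta * (1 - r) \<le> delta" using delta_pos r by (simp add: algebra_simps)
    moreover have "beta * r \<le> beta" using beta_pos True by simp
    ultimately show ?thesis using C0_props(2)[of w] unfolding C1_def by linarith
  next
    case False
    have "beta * (r - 1) \<le> W w r - W w 1" using Wmono[where r=1 and s=r and w=w] False by simp
    thus ?thesis using C0_props(2)[of w] delta_pos unfolding C1_def by (simp add: algebra_simps)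
  qed
qed

lemma Wup: "r > 0 \<Longrightarrow> W w r \<le> delta * r + C0"
proof -
  assume r: "r > 0"
  show ?thesis
  proof (cases "r \<le> 1")
    case True
    have "beta * (1 - r) \<ge> 0" using beta_pos True by simp
    hence "0 \<le> W w 1 - W w r" using Wmono[OF r True, of w] by linarith
    moreover have "delta * r \<ge> 0" using delta_pos r by simp
    ultimately show ?thesis using C0_props(2)[of w] by arith
  next
    case False
    have "W w r - W w 1 \<le> delta * (r - 1)" using Wmono[where r=1 and s=r and w=w] False by simp
    thus ?thesis using C0_props(2)[of w] delta_pos by (simp add: algebra_simps)
  qed
qed

lemma Wlip: "r > 0 \<Longrightarrow> s > 0 \<Longrightarrow> \<bar>W w s - W w r\<bar> \<le> delta * \<bar>s - r\<bar>"
proof -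
  assume "r > 0" "s > 0"
  show ?thesis
  proof (cases "r \<le> s")
    case True thus ?thesis using Wmono[OF \<open>r>0\<close> True, of w] beta_pos
      by (smt (verit) mult_nonneg_nonneg)
  next
    case False thus ?thesis using Wmono[where r=s and s=r and w=w] \<open>s>0\<close> beta_pos
      by (smt (verit) mult_nonneg_nonneg)
  qed
qed

lemma Wjoint: "continuous_on {x. snd x > 0} (\<lambda>x. W (fst x) (snd x))"
  unfolding continuous_on_iff
proof (intro ballI allI impI)
  fix x :: "'a \<times> real" and e :: real
  assume x: "x \<in> {x. snd x > 0}" and e: "e > 0"
  obtain w0 r0 where x0: "x = (w0, r0)" by fastforce
  have r0: "r0 > 0" using x x0 by simp
  obtain d1 where d1: "d1 > 0" "\<And>w. dist w w0 < d1 \<Longrightarrow> dist (W w r0) (W w0 r0) < e/2"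
    using Wc[OF r0] e unfolding continuous_on_iff by (metis UNIV_I half_gt_zero)
  define d where "d = min d1 (e / (2 * delta))"
  have dpos: "d > 0" unfolding d_def using d1 e delta_pos by simp
  show "\<exists>d>0. \<forall>x'\<in>{x. snd x > 0}. dist x' x < d \<longrightarrow> dist (W (fst x') (snd x')) (W (fst x) (snd x)) < e"
  proof (intro exI conjI ballI impI, fact dpos)
    fix y assume y: "y \<in> {x. snd x > 0}" "dist y x < d"
    obtain w r where y0: "y = (w, r)" by fastforce
    have r: "r > 0" using y y0 by simp
    have dw: "dist w w0 < d1" using y(2) y0 x0 dist_fst_le[of y x] unfolding d_def by simp
    have dr: "\<bar>r - r0\<bar> < e / (2 * delta)" using y(2) y0 x0 dist_snd_le[of y x] unfolding d_def
      by (simp add: dist_real_def)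
    have "\<bar>W w r - W w r0\<bar> \<le> delta * \<bar>r - r0\<bar>" using Wlip[OF r0 r] .
    also have "\<dots> < delta * (e / (2 * delta))" using mult_strict_left_mono[OF dr delta_pos] .
    also have "\<dots> = e / 2" using delta_pos by simp
    finally have 1: "\<bar>W w r - W w r0\<bar> < e/2" .
    have 2: "\<bar>W w r0 - W w0 r0\<bar> < e/2" using d1(2)[OF dw] by (simp add: dist_real_def)
    show "dist (W (fst y) (snd y)) (W (fst x) (snd x)) < e"
      using 1 2 y0 x0 abs_triangle_ineq[of "W w r - W w r0" "W w r0 - W w0 r0"] by (simp add: dist_real_def)
  qed
qed

definition "Wq x = (if snd x > 0 then W (fst x) (snd x) else 0)"

lemma Wq_meas: "Wq \<in> borel_measurable borel"
proof -
  have o: "{x :: 'a \<times> real. snd x > 0} \<in> sets borel"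
    by (intro borel_open open_Collect_less continuous_intros)
  have "(\<lambda>x. if x \<in> {x :: 'a \<times> real. snd x > 0} then W (fst x) (snd x) else 0) \<in> borel_measurable borel"
    by (rule borel_measurable_continuous_on_if[OF o Wjoint]) (intro continuous_intros)
  thus ?thesis unfolding Wq_def by simp
qed

definition "F x = (if x \<in> D then f x else x)"

lemma F_meas: "F \<in> borel_measurable borel"
proof -
  have "(\<lambda>x. if x \<in> D then f x else x) \<in> borel_measurable borel"
    by (rule borel_measurable_continuous_on_if[OF borel_open[OF openD] fcont]) (intro continuous_intros)
  thus ?thesis unfolding F_def by simp
qed

lemma Fn_meas: "(F ^^ n) \<in> borel_measurable borel"
proof (induction n)
  case 0 thus ?case by simp
next
  case (Suc n)
  have "(\<lambda>x. F ((F ^^ n) x)) \<in> borel_measurable borel" by (rule measurable_compose[OF Suc F_meas])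
  thus ?case by (simp add: comp_def)
qed

end



context setting begin

definition "G = {x. \<forall>j. (F ^^ j) x \<in> D}"

lemma FD: "x \<in> D \<Longrightarrow> F x = f x" unfolding F_def by simp

lemma Fn_eq_fn1: assumes a: "\<forall>j. (f ^^ j) x \<in> D" shows "(F ^^ n) x = (f ^^ n) x"
proof (induction n)
  case 0 thus ?case by simp
next
  case (Suc n)
  have "(F ^^ n) x \<in> D" using a Suc.IH by simp
  thus ?case using Suc.IH by (simp add: FD)
qed

lemma Fn_eq_fn2: assumes a: "\<forall>j. (F ^^ j) x \<in> D" shows "(F ^^ n) x = (f ^^ n) x"
proof (induction n)
  case 0 thus ?case by simp
next
  case (Suc n)
  have "(F ^^ n) x \<in> D" using a by simp
  thus ?case using Suc.IH by (simp add: FD)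
qed

lemma fp: "(F ^^ j) ((F ^^ n) x) = (F ^^ (j + n)) x" by (simp add: funpow_add)

lemma Dinf_G: "Dinf f D = G"
proof
  show "Dinf f D \<subseteq> G"
  proof
    fix x assume "x \<in> Dinf f D"
    hence a: "\<forall>j. (f ^^ j) x \<in> D" by (rule Dinf_iff[THEN iffD1])
    have "(F ^^ j) x \<in> D" for j using a[rule_format, of j] Fn_eq_fn1[OF a, of j] by simp
    thus "x \<in> G" unfolding G_def by simp
  qed
  show "G \<subseteq> Dinf f D"
  proof
    fix x assume "x \<in> G"
    hence a: "\<forall>j. (F ^^ j) x \<in> D" unfolding G_def by simp
    have "(f ^^ j) x \<in> D" for j using a[rule_format, of j] Fn_eq_fn2[OF a, of j] by simp
    thus "x \<in> Dinf f D" by (simp add: Dinf_iff)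
  qed
qed

lemma G_fn: "x \<in> G \<Longrightarrow> (f ^^ n) x = (F ^^ n) x"
  using Fn_eq_fn2[of x n] unfolding G_def by simp

lemma G_meas: "G \<in> sets borel"
proof -
  have "G = (\<Inter>j. (F ^^ j) -` D \<inter> space borel)" unfolding G_def by auto
  also have "\<dots> \<in> sets borel"
    using measurable_sets[OF Fn_meas borel_open[OF openD]] by auto
  finally show ?thesis .
qed

lemma G_inv: assumes "x \<in> G" shows "(F ^^ n) x \<in> G"
  unfolding G_def
proof (intro CollectI allI)
  fix j
  have "(F ^^ (j + n)) x \<in> D" using assms unfolding G_def by blast
  thus "(F ^^ j) ((F ^^ n) x) \<in> D" by (simp only: fp)
qed

lemma G_D: assumes "x \<in> G" shows "x \<in> D"
proof -
  have "(F ^^ 0) x \<in> D" using assms unfolding G_def by blast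
  thus ?thesis by simp
qed

lemma G_pos: assumes "x \<in> G" shows "snd x > 0"
proof -
  have "x \<in> UNIV \<times> {0<..}" using G_D[OF assms] Dpos by blast
  thus ?thesis by (simp add: mem_Times_iff)
qed

definition "E = {x \<in> G. filterlim (\<lambda>n. snd ((F ^^ n) x)) at_top sequentially}"

lemma Eset_E: "Eset f D = E"
proof -
  have "filterlim (rseq f x) at_top sequentially \<longleftrightarrow> filterlim (\<lambda>n. snd ((F ^^ n) x)) at_top sequentially"
    if "x \<in> G" for x
  proof -
    have "rseq f x = (\<lambda>n. snd ((F ^^ n) x))" unfolding rseq_def using G_fn[OF that] by simp
    thus ?thesis by simp
  qed
  thus ?thesis unfolding Eset_def E_def Dinf_G by blast
qed

lemma filterlim_char: "filterlim (g :: nat \<Rightarrow> real) at_top sequentially \<longleftrightarrow> (\<forall>m::nat. \<exists>N. \<forall>n\<ge>N. real m \<le> g n)"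
proof
  assume "filterlim g at_top sequentially"
  thus "\<forall>m::nat. \<exists>N. \<forall>n\<ge>N. real m \<le> g n" unfolding filterlim_at_top eventually_sequentially by blast
next
  assume a: "\<forall>m::nat. \<exists>N. \<forall>n\<ge>N. real m \<le> g n"
  show "filterlim g at_top sequentially" unfolding filterlim_at_top eventually_sequentially
  proof
    fix Z :: real
    obtain m :: nat where "Z \<le> real m" using real_arch_simple by blast
    then show "\<exists>N. \<forall>n\<ge>N. Z \<le> g n" using a by (meson order_trans)
  qed
qed

lemma snd_meas: "snd \<in> borel_measurable (borel :: ('a \<times> real) measure)"
  by (intro borel_measurable_continuous_onI continuous_intros)

lemma sFn_meas[measurable]: "(\<lambda>x. snd ((F ^^ n) x)) \<in> borel_measurable borel"
  using measurable_compose[OF Fn_meas snd_meas] .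

lemma WqFn_meas[measurable]: "(\<lambda>x. Wq ((F ^^ n) x)) \<in> borel_measurable borel"
  using measurable_compose[OF Fn_meas Wq_meas] .

lemma G_meas'[measurable]: "G \<in> sets borel" by (rule G_meas)

lemma E_meas: "E \<in> sets borel"
proof -
  have "E = {x \<in> space borel. x \<in> G \<and> (\<forall>m::nat. \<exists>N::nat. \<forall>n. N \<le> n \<longrightarrow> real m \<le> snd ((F ^^ n) x))}"
    unfolding E_def filterlim_char by auto
  also have "\<dots> \<in> sets borel" by measurable
  finally show ?thesis .
qed

lemma E_G: "x \<in> E \<Longrightarrow> x \<in> G" unfolding E_def by auto

lemma E_inv: assumes "x \<in> E" shows "(F ^^ n) x \<in> E"
proof -
  have "filterlim (\<lambda>j. snd ((F ^^ (j + n)) x)) at_top sequentially"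
    using filterlim_compose[OF _ filterlim_add_const_nat_at_top, of "\<lambda>j. snd ((F ^^ j) x)"] assms
    unfolding E_def by auto
  hence "filterlim (\<lambda>j. snd ((F ^^ j) ((F ^^ n) x))) at_top sequentially"
    by (simp add: fp)
  thus ?thesis using assms G_inv unfolding E_def by auto
qed

lemma Wq_G: "x \<in> G \<Longrightarrow> Wq x = W (fst x) (snd x)"
  using G_pos unfolding Wq_def by auto

lemma Wstep: assumes "x \<in> D" shows "Wq (F x) \<le> Wq x + k (snd x)"
proof -
  have p: "snd x > 0" using assms Dpos by auto
  have q: "snd (f x) > 0" using assms fpos by auto
  have "W (fst (f (fst x, snd x))) (snd (f (fst x, snd x))) \<le> W (fst x) (snd x) + k (snd x)"
    using W_f[of "fst x" "snd x"] assms by simp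
  thus ?thesis using p q assms unfolding Wq_def by (simp add: FD)
qed

lemma E_Wq: assumes "x \<in> E" shows "filterlim (\<lambda>n. Wq ((F ^^ n) x)) at_top sequentially"
  unfolding filterlim_at_top
proof
  fix Z :: real
  have "eventually (\<lambda>n. (Z + C1) / beta \<le> snd ((F ^^ n) x)) sequentially"
    using assms unfolding E_def filterlim_at_top by auto
  thus "eventually (\<lambda>n. Z \<le> Wq ((F ^^ n) x)) sequentially"
  proof (rule eventually_mono)
    fix n assume a: "(Z + C1) / beta \<le> snd ((F ^^ n) x)"
    have g: "(F ^^ n) x \<in> G" using assms E_G G_inv by auto
    have "Z + C1 \<le> beta * snd ((F ^^ n) x)" using a beta_pos by (simp add: field_simps)
    moreover have "beta * snd ((F ^^ n) x) - C1 \<le> Wq ((F ^^ n) x)"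
      using Wlow[OF G_pos[OF g]] Wq_G[OF g] by simp
    ultimately show "Z \<le> Wq ((F ^^ n) x)" by simp
  qed
qed

definition "T a = {x \<in> E. Wq x \<le> a \<and> (\<forall>n. a < Wq ((F ^^ (Suc n)) x))}"

lemma T_meas: "T a \<in> sets borel"
proof -
  have [measurable]: "E \<in> sets borel" by (rule E_meas)
  have "T a = {x \<in> space borel. x \<in> E \<and> Wq x \<le> a \<and> (\<forall>n. a < Wq ((F ^^ (Suc n)) x))}"
    unfolding T_def by auto
  also have "\<dots> \<in> sets borel" using Wq_meas by measurable
  finally show ?thesis .
qed

lemma T_E: "x \<in> T a \<Longrightarrow> x \<in> E" unfolding T_def by auto

lemma LV: assumes x: "x \<in> E" and b: "Wq x \<le> b" shows "\<exists>n. (F ^^ n) x \<in> T b"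
proof -
  obtain N where N: "\<And>n. n \<ge> N \<Longrightarrow> b + 1 \<le> Wq ((F ^^ n) x)"
    using E_Wq[OF x] unfolding filterlim_at_top eventually_sequentially by blast
  define P where "P = (\<lambda>n. Wq ((F ^^ n) x) \<le> b)"
  have P0: "P 0" using b unfolding P_def by simp
  have Pb: "P n \<Longrightarrow> n \<le> N" for n using N[of n] unfolding P_def by (cases "n \<ge> N") auto
  define m where "m = (GREATEST n. P n)"
  have Pm: "P m" unfolding m_def by (rule GreatestI_nat[of P 0 N, OF P0 Pb])
  have mx: "\<not> P n" if "n > m" for n
  proof
    assume "P n"
    hence "n \<le> m" unfolding m_def by (rule Greatest_le_nat[of P n N, OF _ Pb])
    thus False using that by simp
  qed
  have "(F ^^ m) x \<in> T b"
    unfolding T_def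
  proof (intro CollectI conjI allI)
    show "(F ^^ m) x \<in> E" using E_inv[OF x] .
    show "Wq ((F ^^ m) x) \<le> b" using Pm unfolding P_def .
    fix n
    have "\<not> P (Suc n + m)" using mx by simp
    thus "b < Wq ((F ^^ Suc n) ((F ^^ m) x))"
      unfolding P_def by (simp only: fp)
  qed
  thus ?thesis by blast
qed

end



context setting begin

lemma Dsets: "D \<in> sets borel" by (rule borel_open[OF openD])

lemma img1:
  assumes nz: "emeasure M D \<noteq> 0" and B: "B \<in> sets borel" "B \<subseteq> D"
  shows "f ` B \<in> sets borel \<and> emeasure M (f ` B) = emeasure M B"
proof -
  have meq: "emeasure M (f ` B) = emeasure M B" by (rule fmeas[OF B])
  have "emeasure M (f ` D) \<noteq> 0" using fmeas[OF Dsets order_refl] nz by simp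
  hence fD: "f ` D \<in> sets M" by (rule emeasure_neq_0_sets)
  have "f ` B \<in> sets M"
  proof (cases "emeasure M B = 0")
    case True
    have DB: "D - B \<in> sets M" "B \<in> sets M" using Dsets B(1) sM by auto
    have U: "(D - B) \<union> B \<in> sets M" using DB by (intro sets.Un)
    have "emeasure M D \<le> emeasure M ((D - B) \<union> B)"
      by (rule emeasure_mono[OF _ U]) auto
    also have "\<dots> \<le> emeasure M (D - B) + emeasure M B" by (rule emeasure_subadditive[OF DB])
    also have "\<dots> = emeasure M (D - B)" using True by simp
    finally have "emeasure M (D - B) \<noteq> 0" using nz by (auto simp: le_zero_eq)
    hence "emeasure M (f ` (D - B)) \<noteq> 0" using fmeas[of "D - B"] Dsets B(1) by auto
    hence fDB: "f ` (D - B) \<in> sets M" by (rule emeasure_neq_0_sets)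
    have "f ` (D - (D - B)) = f ` D - f ` (D - B)"
      by (rule inj_on_image_set_diff[OF finj]) auto
    moreover have "D - (D - B) = B" using B(2) by auto
    ultimately have "f ` B = f ` D - f ` (D - B)" by simp
    thus ?thesis using fD fDB by simp
  next
    case False
    thus ?thesis using meq by (intro emeasure_neq_0_sets) simp
  qed
  thus ?thesis using meq sM by simp
qed

lemma F_img: "B \<subseteq> D \<Longrightarrow> F ` B = f ` B"
  by (rule image_cong) (auto simp: FD)

lemma G_sub_D: "G \<subseteq> D" using G_D by blast

lemma G_F: "x \<in> G \<Longrightarrow> F x \<in> G"
  using G_inv[of x 1] by simp

lemma imgn:
  assumes nz: "emeasure M D \<noteq> 0" and B: "B \<in> sets borel" "B \<subseteq> G"
  shows "(F ^^ n) ` B \<in> sets borel \<and> emeasure M ((F ^^ n) ` B) = emeasure M B \<and> (F ^^ n) ` B \<subseteq> G"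
proof (induction n)
  case 0 thus ?case using B by simp
next
  case (Suc n)
  let ?B = "(F ^^ n) ` B"
  have sub: "?B \<subseteq> D" using Suc G_sub_D by blast
  have eq: "(F ^^ Suc n) ` B = f ` ?B"
    using F_img[OF sub] by (simp add: image_comp)
  have "f ` ?B \<in> sets borel \<and> emeasure M (f ` ?B) = emeasure M ?B"
    using img1[OF nz _ sub] Suc by simp
  moreover have "f ` ?B \<subseteq> G"
  proof
    fix y assume "y \<in> f ` ?B"
    then obtain z where z: "z \<in> ?B" "y = f z" by (rule imageE)
    have "z \<in> G" using z(1) Suc by blast
    hence "F z \<in> G" by (rule G_F)
    moreover have "z \<in> D" using sub z(1) by blast
    ultimately show "y \<in> G" using z(2) FD by simp
  qed
  ultimately show ?case using eq Suc by simp
qed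

lemma inj_F: "inj_on F D"
proof -
  have "inj_on F D = inj_on f D" by (rule inj_on_cong) (simp add: FD)
  thus ?thesis using finj by simp
qed

lemma inj_Fn: "inj_on (F ^^ n) G"
proof (induction n)
  case 0 thus ?case by simp
next
  case (Suc n)
  have "(F ^^ n) ` G \<subseteq> D" using G_inv G_sub_D by blast
  hence "inj_on F ((F ^^ n) ` G)" using inj_F by (rule inj_on_subset[rotated])
  hence "inj_on (F \<circ> (F ^^ n)) G" using Suc by (intro comp_inj_on)
  thus ?case by (simp add: comp_def)
qed

lemma T_G: "x \<in> T a \<Longrightarrow> x \<in> G" using T_E E_G by blast


lemma mono_T:
  assumes nz: "emeasure M D \<noteq> 0" and ab: "a \<le> b"
  shows "emeasure M (T a) \<le> emeasure M (T b)"
proof -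
  define P where "P n = T a \<inter> (F ^^ n) -` T b" for n
  define Q where "Q n = (F ^^ n) ` P n" for n
  have Pb: "P n \<in> sets borel" for n
  proof -
    have "(F ^^ n) -` T b \<inter> space borel \<in> sets borel" by (rule measurable_sets[OF Fn_meas T_meas])
    thus ?thesis unfolding P_def using T_meas by auto
  qed
  have PG: "P n \<subseteq> G" for n unfolding P_def using T_G by blast
  have imgQ: "Q n \<in> sets borel \<and> emeasure M (Q n) = emeasure M (P n)" for n
    using imgn[OF nz Pb PG, of n] unfolding Q_def by simp
  have QT: "Q n \<subseteq> T b" for n unfolding Q_def P_def by auto
  have shift: "(F ^^ m) x = (F ^^ n) ((F ^^ (m - n)) x)" if "n \<le> m" for n m x
    using fp[of n "m - n" x] that by simp
  have later: "b < Wq ((F ^^ m) x)" if h1: "(F ^^ n) x \<in> T b" and h2: "n < m" for n m x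
  proof -
    obtain j where j: "m - n = Suc j" using h2 by (metis Suc_diff_Suc)
    have "b < Wq ((F ^^ Suc j) ((F ^^ n) x))" using h1 unfolding T_def by blast
    moreover have "(F ^^ Suc j) ((F ^^ n) x) = (F ^^ m) x"
    proof -
      have mj: "Suc j + n = m" using j h2 by simp
      have "(F ^^ Suc j) ((F ^^ n) x) = (F ^^ (Suc j + n)) x" by (rule fp)
      thus ?thesis by (simp only: mj)
    qed
    ultimately show ?thesis by simp
  qed
  have Pdisj: False if h1: "x \<in> P n" and h2: "x \<in> P m" and h3: "n < m" for x n m
  proof -
    have "(F ^^ n) x \<in> T b" "(F ^^ m) x \<in> T b" using h1 h2 unfolding P_def by auto
    hence "b < Wq ((F ^^ m) x)" "Wq ((F ^^ m) x) \<le> b" using later[OF _ h3] unfolding T_def by auto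
    thus False by simp
  qed
  have Qdisj: False if h1: "y \<in> Q n" and h2: "y \<in> Q m" and h3: "n < m" for y n m
  proof -
    obtain x where x: "x \<in> P n" "y = (F ^^ n) x" using h1 unfolding Q_def by blast
    obtain z where z: "z \<in> P m" "y = (F ^^ m) z" using h2 unfolding Q_def by blast
    have xG: "x \<in> G" and zG: "z \<in> G" using x z PG by blast+
    have "(F ^^ n) x = (F ^^ n) ((F ^^ (m - n)) z)" using x z shift[of n m z] h3 by simp
    hence "x = (F ^^ (m - n)) z"
      by (rule inj_onD[OF inj_Fn _ xG G_inv[OF zG]])
    moreover have "a < Wq ((F ^^ (m - n)) z)"
    proof -
      have zT: "z \<in> T a" using z(1) unfolding P_def by blast
      obtain j where j: "m - n = Suc j" using h3 by (metis Suc_diff_Suc)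
      show ?thesis using zT j unfolding T_def by auto
    qed
    moreover have "Wq x \<le> a" using x(1) unfolding P_def T_def by blast
    ultimately show False by simp
  qed
  have dP: "disjoint_family P"
    unfolding disjoint_family_on_def
  proof (intro ballI impI)
    fix n m :: nat assume "n \<noteq> m"
    show "P n \<inter> P m = {}"
    proof (cases "n < m")
      case True thus ?thesis using Pdisj by blast
    next
      case False hence "m < n" using \<open>n \<noteq> m\<close> by simp
      thus ?thesis using Pdisj by blast
    qed
  qed
  have dQ: "disjoint_family Q"
    unfolding disjoint_family_on_def
  proof (intro ballI impI)
    fix n m :: nat assume "n \<noteq> m"
    show "Q n \<inter> Q m = {}"
    proof (cases "n < m")
      case True thus ?thesis using Qdisj by blast
    next
      case False hence "m < n" using \<open>n \<noteq> m\<close> by simp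
      thus ?thesis using Qdisj by blast
    qed
  qed
  have cover: "T a = (\<Union>n. P n)"
  proof
    show "T a \<subseteq> (\<Union>n. P n)"
    proof
      fix x assume xT: "x \<in> T a"
      hence "x \<in> E" "Wq x \<le> b" using ab unfolding T_def by auto
      then obtain n where "(F ^^ n) x \<in> T b" using LV by blast
      hence "x \<in> P n" using xT unfolding P_def by simp
      thus "x \<in> (\<Union>n. P n)" by blast
    qed
    show "(\<Union>n. P n) \<subseteq> T a" unfolding P_def by blast
  qed
  have rP: "range P \<subseteq> sets M" using Pb sM by auto
  have rQ: "range Q \<subseteq> sets M" using imgQ sM by auto
  have "emeasure M (T a) = (\<Sum>n. emeasure M (P n))"
    using suminf_emeasure[OF rP dP] cover by simp
  also have "\<dots> = (\<Sum>n. emeasure M (Q n))" using imgQ by simp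
  also have "\<dots> = emeasure M (\<Union>n. Q n)" by (rule suminf_emeasure[OF rQ dQ])
  also have "\<dots> \<le> emeasure M (T b)"
    by (rule emeasure_mono) (use QT T_meas sM in auto)
  finally show ?thesis .
qed

end



context setting begin

lemma Kbound: obtains K where "\<And>r. r > 0 \<Longrightarrow> \<bar>k r\<bar> \<le> K"
proof -
  obtain K where K: "\<forall>y\<in>k ` {0<..}. norm y \<le> K" using k_bdd unfolding bounded_iff by blast
  show ?thesis
  proof (rule that)
    fix r :: real assume "r > 0"
    hence "k r \<in> k ` {0<..}" by simp
    thus "\<bar>k r\<bar> \<le> K" using K by auto
  qed
qed

lemma layer:
  assumes e: "e > 0"
  shows "\<exists>a0. \<forall>a\<ge>a0. \<forall>x\<in>T a. a < Wq (F x) \<and> Wq (F x) \<le> a + e"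
proof -
  obtain K where K: "\<And>r. r > 0 \<Longrightarrow> \<bar>k r\<bar> \<le> K" using Kbound by blast
  have "eventually (\<lambda>r. dist (k r) 0 < e) at_top" by (rule tendstoD[OF k_lim e])
  then obtain R0 where R0: "\<And>r. r \<ge> R0 \<Longrightarrow> dist (k r) 0 < e"
    unfolding eventually_at_top_linorder by blast
  define a0 where "a0 = K + C0 + delta * \<bar>R0\<bar>"
  have "\<forall>a\<ge>a0. \<forall>x\<in>T a. a < Wq (F x) \<and> Wq (F x) \<le> a + e"
  proof (intro allI impI ballI)
    fix a x assume a: "a0 \<le> a" and x: "x \<in> T a"
    have xG: "x \<in> G" using x by (rule T_G)
    have xD: "x \<in> D" using xG by (rule G_D)
    have r: "snd x > 0" using xG by (rule G_pos)
    have low: "a < Wq (F x)"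
    proof -
      have "a < Wq ((F ^^ Suc 0) x)" using x unfolding T_def by blast
      thus ?thesis by simp
    qed
    have step: "Wq (F x) \<le> Wq x + k (snd x)" by (rule Wstep[OF xD])
    have up: "Wq x \<le> delta * snd x + C0" using Wup[OF r] Wq_G[OF xG] by simp
    have kK: "k (snd x) \<le> K" using K[OF r] by simp
    have "delta * \<bar>R0\<bar> < delta * snd x" using low step up kK a unfolding a0_def by linarith
    hence "\<bar>R0\<bar> < snd x" using delta_pos by simp
    hence "R0 \<le> snd x" by simp
    hence "\<bar>k (snd x)\<bar> < e" using R0 by (simp add: dist_real_def)
    hence "k (snd x) < e" by linarith
    moreover have "Wq x \<le> a" using x unfolding T_def by blast
    ultimately show "a < Wq (F x) \<and> Wq (F x) \<le> a + e" using low step by linarith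
  qed
  thus ?thesis by blast
qed

lemma box_measure: "R \<ge> 0 \<Longrightarrow> emeasure M (UNIV \<times> {0..R}) = ennreal R"
proof -
  assume R: "R \<ge> 0"
  have sp: "space mu = UNIV" using sets_eq_imp_space_eq[OF smu] by simp
  have "UNIV \<in> sets mu" using sp sets.top[of mu] by simp
  hence "emeasure M (UNIV \<times> {0..R}) = emeasure mu UNIV * emeasure lborel {0..R}"
    by (intro lborel.emeasure_pair_measure_Times) auto
  moreover have "emeasure mu UNIV = 1" using prob_space.emeasure_space_1[OF prob] sp by simp
  ultimately show ?thesis using R by simp
qed

lemma sum_bound:
  assumes nz: "emeasure M D \<noteq> 0" and e: "e > 0"
    and lay: "\<forall>a\<ge>a0. \<forall>x\<in>T a. a < Wq (F x) \<and> Wq (F x) \<le> a + e"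
    and a: "a \<ge> a0"
  shows "(\<Sum>j<N. emeasure M (T (a + real j * e))) \<le> ennreal (max 0 ((a + real N * e + C1) / beta))"
proof -
  define TT where "TT j = T (a + real j * e)" for j
  have lay': "a + real j * e < Wq (F x) \<and> Wq (F x) \<le> a + real j * e + e" if "x \<in> TT j" for j x
  proof -
    have "a + real j * e \<ge> a0" using a e by (simp add: add_increasing2)
    thus ?thesis using lay that unfolding TT_def by blast
  qed
  have dis: "disjoint_family_on TT {..<N}"
    unfolding disjoint_family_on_def
  proof (intro ballI impI)
    fix i j assume "i \<in> {..<N}" "j \<in> {..<N}" "i \<noteq> j"
    have nb: False if "x \<in> TT i" "x \<in> TT j" "i < j" for x i j
    proof -
      have "real i + 1 \<le> real j" using that(3) by simp
      hence "real i * e + e \<le> real j * e" using e by (metis distrib_right mult_1 mult_right_mono less_le_not_le nle_le)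
      thus False using lay'[OF that(1)] lay'[OF that(2)] by linarith
    qed
    show "TT i \<inter> TT j = {}"
    proof (cases "i < j")
      case True thus ?thesis using nb by blast
    next
      case False hence "j < i" using \<open>i \<noteq> j\<close> by simp
      thus ?thesis using nb by blast
    qed
  qed
  define U where "U = (\<Union>j\<in>{..<N}. TT j)"
  have TTb: "TT j \<in> sets borel" for j unfolding TT_def by (rule T_meas)
  have Ub: "U \<in> sets borel" unfolding U_def using TTb by auto
  have UD: "U \<subseteq> D" unfolding U_def using T_G G_D TT_def by blast
  define R where "R = max 0 ((a + real N * e + C1) / beta)"
  have fU: "f ` U \<subseteq> UNIV \<times> {0..R}"
  proof
    fix y assume "y \<in> f ` U"
    then obtain x where x: "x \<in> U" "y = f x" by (rule imageE)
    obtain j where j: "j < N" "x \<in> TT j" using x(1) unfolding U_def by blast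
    have xD: "x \<in> D" using x(1) UD by blast
    have yF: "y = F x" using x(2) FD[OF xD] by simp
    have ypos: "snd y > 0" using fpos xD x(2) by auto
    have "Wq y \<le> a + real j * e + e" using lay'[OF j(2)] yF by simp
    moreover have "real j * e + e \<le> real N * e"
    proof -
      have "real j + 1 \<le> real N" using j(1) by simp
      thus ?thesis using e by (metis distrib_right mult_1 mult_right_mono less_le_not_le nle_le)
    qed
    moreover have "beta * snd y - C1 \<le> Wq y" using Wlow[OF ypos] ypos unfolding Wq_def by simp
    ultimately have "beta * snd y \<le> a + real N * e + C1" by linarith
    hence "snd y \<le> (a + real N * e + C1) / beta" using beta_pos by (simp add: field_simps)
    hence "snd y \<le> R" unfolding R_def by linarith
    thus "y \<in> UNIV \<times> {0..R}" using ypos by (simp add: mem_Times_iff)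
  qed
  have "closed (UNIV \<times> {0..R})" by (intro closed_Times closed_UNIV closed_atLeastAtMost)
  hence boxs: "UNIV \<times> {0..R} \<in> sets M" using sM borel_closed by metis
  have "(\<Sum>j<N. emeasure M (T (a + real j * e))) = (\<Sum>j\<in>{..<N}. emeasure M (TT j))" unfolding TT_def by simp
  also have "\<dots> = emeasure M U" unfolding U_def
    by (rule sum_emeasure) (use TTb sM dis in auto)
  also have "\<dots> = emeasure M (f ` U)" using fmeas[OF Ub UD] by simp
  also have "\<dots> \<le> emeasure M (UNIV \<times> {0..R})" by (rule emeasure_mono[OF fU boxs])
  also have "\<dots> = ennreal R" by (rule box_measure) (simp add: R_def)
  finally show ?thesis unfolding R_def .
qed

end



context setting begin

lemma T_zero:
  assumes nz: "emeasure M D \<noteq> 0"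
  shows "emeasure M (T a) = 0"
proof (rule ccontr)
  assume ne: "emeasure M (T a) \<noteq> 0"
  have fin: "emeasure M (T a) \<noteq> top"
  proof -
    obtain a0 where lay: "\<forall>a\<ge>a0. \<forall>x\<in>T a. a < Wq (F x) \<and> Wq (F x) \<le> a + 1"
      using layer[of 1] by auto
    define a' where "a' = max a a0"
    have "emeasure M (T a) \<le> emeasure M (T a')" using mono_T[OF nz] unfolding a'_def by simp
    also have "\<dots> = (\<Sum>j<1. emeasure M (T (a' + real j * 1)))" by simp
    also have "\<dots> \<le> ennreal (max 0 ((a' + real 1 * 1 + C1) / beta))"
      by (rule sum_bound[OF nz _ lay]) (auto simp: a'_def)
    finally show ?thesis using ennreal_neq_top top.not_eq_extremum by (metis neq_top_trans)
  qed
  then obtain t where t: "t \<ge> 0" "emeasure M (T a) = ennreal t"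
    by (cases "emeasure M (T a)") auto
  have tpos: "t > 0" using t ne by (metis ennreal_0 le_less)
  define e where "e = t * beta / 2"
  have e: "e > 0" unfolding e_def using tpos beta_pos by simp
  obtain a0 where lay: "\<forall>a\<ge>a0. \<forall>x\<in>T a. a < Wq (F x) \<and> Wq (F x) \<le> a + e"
    using layer[OF e] by auto
  define a' where "a' = max a a0"
  define X where "X = 2 * (\<bar>a'\<bar> + \<bar>C1\<bar>)"
  obtain N :: nat where N: "X / (beta * t) < real N" using reals_Archimedean2 by blast
  have bt: "beta * t > 0" using beta_pos tpos by simp
  have NX: "X < real N * (beta * t)" using N bt by (simp add: pos_divide_less_eq)
  have X0: "X \<ge> 0" unfolding X_def by simp
  have Npos: "real N * t > 0"
  proof -
    have "real N * (beta * t) > 0" using NX X0 by linarith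
    hence "real N > 0" using bt by (simp add: zero_less_mult_iff)
    thus ?thesis using tpos by simp
  qed
  define R where "R = max 0 ((a' + real N * e + C1) / beta)"
  have "(\<Sum>j<N. emeasure M (T a)) \<le> (\<Sum>j<N. emeasure M (T (a' + real j * e)))"
  proof (rule sum_mono)
    fix j assume "j \<in> {..<N}"
    have "a \<le> a' + real j * e" unfolding a'_def using e by (simp add: add_increasing2)
    thus "emeasure M (T a) \<le> emeasure M (T (a' + real j * e))" by (rule mono_T[OF nz])
  qed
  also have "\<dots> \<le> ennreal R" unfolding R_def
    by (rule sum_bound[OF nz e lay]) (simp add: a'_def)
  finally have "of_nat N * ennreal t \<le> ennreal R" using t by simp
  moreover have "of_nat N * ennreal t = ennreal (real N * t)"
    using t(1) by (simp add: ennreal_of_nat_eq_real_of_nat ennreal_mult'')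
  ultimately have le: "real N * t \<le> R" using ennreal_le_iff[of R "real N * t"] unfolding R_def by simp
  show False
  proof (cases "(a' + real N * e + C1) / beta \<le> 0")
    case True
    hence "R = 0" unfolding R_def by simp
    thus False using le Npos by simp
  next
    case False
    hence "R = (a' + real N * e + C1) / beta" unfolding R_def by simp
    hence "real N * t * beta \<le> a' + real N * e + C1" using le beta_pos by (simp add: pos_le_divide_eq)
    moreover have "real N * e = real N * t * beta / 2" unfolding e_def by simp
    moreover have "real N * (beta * t) = real N * t * beta" by simp
    moreover have "a' + C1 \<le> \<bar>a'\<bar> + \<bar>C1\<bar>" by simp
    ultimately have h1: "real N * t * beta \<le> \<bar>a'\<bar> + real N * t * beta / 2 + \<bar>C1\<bar>"
      and h2: "2 * (\<bar>a'\<bar> + \<bar>C1\<bar>) < real N * t * beta" using NX unfolding X_def by linarith+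
    obtain P where P: "P = real N * t * beta" by blast
    have q1: "P \<le> \<bar>a'\<bar> + P / 2 + \<bar>C1\<bar>" "2 * (\<bar>a'\<bar> + \<bar>C1\<bar>) < P" using h1 h2 P by simp_all
    obtain A where A: "A = \<bar>a'\<bar> + \<bar>C1\<bar>" by blast
    have "P \<le> A + P / 2" "2 * A < P" using q1 A by simp_all
    thus False by simp
  qed
qed

lemma E_null: "E \<in> null_sets M"
proof -
  have EM: "E \<in> sets M" using E_meas sM by simp
  show ?thesis
  proof (cases "emeasure M D = 0")
    case True
    have "D \<in> null_sets M" using True Dsets sM by (intro null_setsI) auto
    moreover have "E \<subseteq> D" using E_G G_D by blast
    ultimately show ?thesis using null_sets_subset EM by blast
  next
    case False
    define PP where "PP m n = E \<inter> (F ^^ n) -` T (real m)" for m n :: nat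
    have PPb: "PP m n \<in> sets borel" for m n
    proof -
      have "(F ^^ n) -` T (real m) \<inter> space borel \<in> sets borel" by (rule measurable_sets[OF Fn_meas T_meas])
      thus ?thesis unfolding PP_def using E_meas by auto
    qed
    have PPG: "PP m n \<subseteq> G" for m n unfolding PP_def using E_G by blast
    have PPn: "PP m n \<in> null_sets M" for m n
    proof -
      have "emeasure M (PP m n) = emeasure M ((F ^^ n) ` PP m n)"
        using imgn[OF False PPb PPG, of n] by simp
      also have "\<dots> \<le> emeasure M (T (real m))"
        by (rule emeasure_mono) (use T_meas sM in \<open>auto simp: PP_def\<close>)
      also have "\<dots> = 0" by (rule T_zero[OF False])
      finally have "emeasure M (PP m n) = 0" by simp
      thus ?thesis using PPb sM by (intro null_setsI) auto
    qed
    have U: "(\<Union>m. \<Union>n. PP m n) \<in> null_sets M" using PPn by (intro null_sets_UN) 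
    have "E \<subseteq> (\<Union>m. \<Union>n. PP m n)"
    proof
      fix x assume x: "x \<in> E"
      obtain m :: nat where "Wq x \<le> real m" using real_arch_simple by blast
      then obtain n where "(F ^^ n) x \<in> T (real m)" using LV[OF x] by blast
      hence "x \<in> PP m n" using x unfolding PP_def by simp
      thus "x \<in> (\<Union>m. \<Union>n. PP m n)" by blast
    qed
    thus ?thesis using null_sets_subset[OF U EM] by simp
  qed
qed

end

theorem mainTheorem4:
  fixes mu :: "'a::{metric_space, topological_ab_group_add} measure"
    and psi :: "real \<Rightarrow> 'a"
    and f :: "'a \<times> real \<Rightarrow> 'a \<times> real"
    and D :: "('a \<times> real) set"
    and W :: "'a \<Rightarrow> real \<Rightarrow> real"
    and k :: "real \<Rightarrow> real"
    and beta delta :: real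
  assumes compact_Omega: "compact (UNIV :: 'a set)"
    and psi_cont: "continuous_on UNIV psi"
    and psi_hom: "\<And>s t. psi (s + t) = psi s + psi t"
    and psi_dense: "closure (range psi) = UNIV"
    and haar: "haar_prob mu"
    and emb: "mp_embedding (mu \<Otimes>\<^sub>M lborel) D f"
    and W_C1: "C1_psi_r psi W"
    and beta_pos: "beta > 0" and delta_pos: "delta > 0"
    and W_r_bounds: "\<And>w r. r > 0 \<Longrightarrow> \<exists>d. (W w has_real_derivative d) (at r) \<and> beta \<le> d \<and> d \<le> delta"
    and k_decr: "antimono_on {0<..} k"
    and k_bdd: "bounded (k ` {0<..})"
    and k_lim: "(k \<longlongrightarrow> 0) at_top"
    and W_f: "\<And>w r. (w, r) \<in> D \<Longrightarrow> W (fst (f (w, r))) (snd (f (w, r))) \<le> W w r + k r"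
  shows "\<exists>Z. Z \<in> null_sets (mu \<Otimes>\<^sub>M lborel) \<and> Z \<subseteq> Uset f D \<and>
           (\<forall>x \<in> Uset f D - Z. liminf (\<lambda>n. ereal (rseq f x n)) < \<infinity>) \<and>
           Eset f D \<subseteq> Z \<and> Eset f D \<in> null_sets (mu \<Otimes>\<^sub>M lborel)"
proof -
  have prob: "prob_space mu" using haar unfolding haar_prob_def by (rule conjunct1)
  have smu: "sets mu = sets borel" using haar unfolding haar_prob_def by simp
  have Wc: "continuous_on UNIV (\<lambda>w. W w r)" if "r > 0" for r
  proof -
    have "\<forall>r>0. C1_psi psi (\<lambda>w. W w r)" using W_C1 unfolding C1_psi_r_def by (rule conjunct1)
    hence "C1_psi psi (\<lambda>w. W w r)" using that by simp
    thus ?thesis unfolding C1_psi_def by (rule conjunct1)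
  qed
  have inst: "setting mu f D W k beta delta"
    unfolding setting_def
    apply (intro conjI allI impI)
    apply (fact compact_Omega)
    apply (fact prob)
    apply (fact smu)
    apply (fact emb)
    apply (erule Wc)
    apply (fact beta_pos)
    apply (fact delta_pos)
    apply (erule W_r_bounds)
    apply (fact k_bdd)
    apply (fact k_lim)
    apply (erule W_f)
    done
  have EN: "Eset f D \<in> null_sets (mu \<Otimes>\<^sub>M lborel)"
    using setting.E_null[OF inst] setting.Eset_E[OF inst] by simp
  have EU: "Eset f D \<subseteq> Uset f D"
  proof
    fix x assume x: "x \<in> Eset f D"
    hence xD: "x \<in> Dinf f D" and fl: "filterlim (rseq f x) at_top sequentially" unfolding Eset_def by auto
    have "(\<lambda>n. ereal (rseq f x n)) \<longlonglongrightarrow> \<infinity>" using fl by (simp add: tendsto_PInfty_eq_at_top)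
    hence "limsup (\<lambda>n. ereal (rseq f x n)) = \<infinity>"
      by (rule lim_imp_Limsup[OF trivial_limit_sequentially])
    thus "x \<in> Uset f D" using xD unfolding Uset_def by simp
  qed
  have LI: "\<forall>x \<in> Uset f D - Eset f D. liminf (\<lambda>n. ereal (rseq f x n)) < \<infinity>"
  proof
    fix x assume x: "x \<in> Uset f D - Eset f D"
    hence xD: "x \<in> Dinf f D" unfolding Uset_def by auto
    show "liminf (\<lambda>n. ereal (rseq f x n)) < \<infinity>"
    proof (rule ccontr)
      assume "\<not> liminf (\<lambda>n. ereal (rseq f x n)) < \<infinity>"
      hence "liminf (\<lambda>n. ereal (rseq f x n)) = \<infinity>" by (simp add: less_top)
      hence "(\<lambda>n. ereal (rseq f x n)) \<longlonglongrightarrow> \<infinity>" by (simp add: liminf_PInfty)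
      hence "filterlim (rseq f x) at_top sequentially" by (simp add: tendsto_PInfty_eq_at_top)
      hence "x \<in> Eset f D" using xD unfolding Eset_def by simp
      thus False using x by simp
    qed
  qed
  show ?thesis using EN EU LI by blast
qed

end
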